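(* Consider the input-output system $\dot{\mathbf x}=\mathbf F(\mathbf x,u):=\mathbf f(\mathbf x)+\hat{\mathbf e}_1 g(u,x_1)$, $u\in J$, satisfying assumption (A0). Let $\mathbf x^*(u)$, $u\in J$, be a continuously differentiable curve of steady states ($\mathbf F(\mathbf x^*(u),u)=\mathbf 0$) along which $\frac{\partial \mathbf F}{\partial\mathbf x}(\mathbf x^*(u),u)$ is nonsingular, and let $\mathbf J^*=\frac{\partial\mathbf f}{\partial\mathbf x}(\mathbf x^*(u))$. Fix $j\in\{1,\ldots,n\}$. Then: (1) (Flow) $\displaystyle \frac{\partial x_j^*}{\partial u}=\frac{(-1)^j\,\mathbf J^*[\hat 1,\hat j]}{\det \mathbf J^*}$; (2) (Activation) $\displaystyle \frac{\partial x_j^*}{\partial u}=\frac{(-1)^j(x_T-x_1^* )\,\mathbf J^*[\hat 1,\hat j]}{\det\big(\mathbf J^*-\hat{\mathbf e}_{11}[u+k_{\mathrm{on}}+k_{\mathrm{off}}]\big)}$; (3) (Inhibition) $\displaystyle \frac{\partial x_j^*}{\partial u}=\frac{(-1)^{j+1}x_1^*\,\mathbf J^*[\hat 1,\hat j]}{\det\big(\mathbf J^*-\hat{\mathbf e}_{11}[u+k_{\mathrm{on}}+k_{\mathrm{off}}]\big)}$.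
   Context: $\mathcal X\subset\mathbb R^n$, $J\subset\mathbb R$ is an interval, and $\mathbf f:\mathcal X\to\mathbb R^n$ is $C^1$, with every entry of $\frac{\partial\mathbf f}{\partial\mathbf x}$ of constant sign on $\mathcal X$ and negative diagonal entries. $\hat{\mathbf e}_1$ is the first standard basis vector and $\hat{\mathbf e}_{11}$ the matrix with $1$ in position $(1,1)$ and zeros elsewhere. The control term $g$ is one of: flow, $g(u,x_1)=u$; activation, $g(u,x_1)=(u+k_{\mathrm{on}})(x_T-x_1)-k_{\mathrm{off}}x_1$; inhibition, $g(u,x_1)=k_{\mathrm{on}}(x_T-x_1)-(u+k_{\mathrm{off}})x_1$, with constants $x_T,k_{\mathrm{on}},k_{\mathrm{off}}>0$. Assumption (A0): for every $u_0\in J$ there is $\mathbf x_0\in\mathcal X$ with $\mathbf F(\mathbf x_0,u_0)=\mathbf 0$ and $\frac{\partial\mathbf F}{\partial\mathbf x}(\mathbf x_0,u_0)$ of full rank. For a matrix $\mathbf M$, $\mathbf M[\hat 1,\hat j]$ is the determinant of $\mathbf M$ with row $1$ and column $j$ deleted. *)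

theory Defs
  imports "HOL-Analysis.Analysis"
begin

text \<open>Coordinates of R^n are labelled by a finite type 'n together with a numbering
  num : {1..n} -> 'n (a bijection), so that coordinate k (1-based, as in the paper)
  is num k.\<close>

definition det_nat :: "nat \<Rightarrow> (nat \<Rightarrow> nat \<Rightarrow> real) \<Rightarrow> real" where
  "det_nat m M = (\<Sum>p | p permutes {1..m}. of_int (sign p) * (\<Prod>i=1..m. M i (p i)))"

text \<open>M[r-hat, c-hat]: determinant of M with row r and column c deleted (1-based).\<close>
definition minor_det :: "(nat \<Rightarrow> 'n::finite) \<Rightarrow> real^'n^'n \<Rightarrow> nat \<Rightarrow> nat \<Rightarrow> real" where
  "minor_det num M r c = det_nat (CARD('n) - 1)
     (\<lambda>a b. M $ num (if a < r then a else a + 1) $ num (if b < c then b else b + 1))"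

definition e1 :: "(nat \<Rightarrow> 'n::finite) \<Rightarrow> real^'n" where
  "e1 num = axis (num 1) 1"

definition e11 :: "(nat \<Rightarrow> 'n::finite) \<Rightarrow> real^'n^'n" where
  "e11 num = (\<chi> i k. if i = num 1 \<and> k = num 1 then 1 else 0)"

definition Fsys :: "(nat \<Rightarrow> 'n::finite) \<Rightarrow> (real^'n \<Rightarrow> real^'n) \<Rightarrow> (real \<Rightarrow> real \<Rightarrow> real)
    \<Rightarrow> real^'n \<Rightarrow> real \<Rightarrow> real^'n" where
  "Fsys num f g x u = f x + g u (x $ num 1) *\<^sub>R e1 num"

definition g_flow :: "real \<Rightarrow> real \<Rightarrow> real" where
  "g_flow u x1 = u"

definition g_act :: "real \<Rightarrow> real \<Rightarrow> real \<Rightarrow> real \<Rightarrow> real \<Rightarrow> real" where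
  "g_act xT kon koff u x1 = (u + kon) * (xT - x1) - koff * x1"

definition g_inh :: "real \<Rightarrow> real \<Rightarrow> real \<Rightarrow> real \<Rightarrow> real \<Rightarrow> real" where
  "g_inh xT kon koff u x1 = kon * (xT - x1) - (u + koff) * x1"

end

theory Submission imports Defs begin

definition detS :: "'a set \<Rightarrow> ('a \<Rightarrow> 'a \<Rightarrow> real) \<Rightarrow> real" where
  "detS S M = (\<Sum>p | p permutes S. of_int (sign p) * (\<Prod>i\<in>S. M i (p i)))"

lemma det_detS: "det (A::real^'n^'n) = detS UNIV (\<lambda>i k. A$i$k)"
  by (simp add: det_def detS_def)

lemma det_nat_detS: "det_nat m M = detS {1..m} M"
  by (simp add: det_nat_def detS_def)

lemma detS_cong:
  assumes "\<And>a b. a \<in> S \<Longrightarrow> b \<in> S \<Longrightarrow> M a b = M' a b"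
  shows "detS S M = detS S M'"
  unfolding detS_def
proof (rule sum.cong[OF refl])
  fix p assume "p \<in> {p. p permutes S}"
  hence p: "p permutes S" by simp
  show "of_int (sign p) * (\<Prod>i\<in>S. M i (p i)) = of_int (sign p) * (\<Prod>i\<in>S. M' i (p i))"
    using assms permutes_in_image[OF p] by (auto intro!: prod.cong)
qed

lemma detS_reindex:
  assumes h: "bij_betw h S T" and fin: "finite S"
  shows "detS T M = detS S (\<lambda>a b. M (h a) (h b))"
proof -
  let ?phi = "\<lambda>\<pi> x. if x \<in> T then h (\<pi> (inv_into S h x)) else x"
  have bij: "bij_betw ?phi {\<pi>. \<pi> permutes S} {\<pi>. \<pi> permutes T}"
    by (rule bij_betw_permutations[OF h])
  have hS: "h ` S = T" using h by (simp add: bij_betw_def)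
  have inj: "inj_on h S" using h by (simp add: bij_betw_def)
  have "detS T M = (\<Sum>\<pi> | \<pi> permutes S. of_int (sign (?phi \<pi>)) * (\<Prod>i\<in>T. M i (?phi \<pi> i)))"
    unfolding detS_def
    by (rule sum.reindex_bij_betw[OF bij, symmetric])
  also have "\<dots> = detS S (\<lambda>a b. M (h a) (h b))"
    unfolding detS_def
  proof (rule sum.cong[OF refl])
    fix \<pi> assume "\<pi> \<in> {\<pi>. \<pi> permutes S}"
    hence p: "\<pi> permutes S" by simp
    have "?phi \<pi> = map_permutation S h \<pi>"
      by (simp add: map_permutation_def restrict_id_def hS fun_eq_iff)
    hence s: "sign (?phi \<pi>) = sign \<pi>"
      using sign_map_permutation[OF inj p fin] by simp
    have "(\<Prod>i\<in>T. M i (?phi \<pi> i)) = (\<Prod>a\<in>S. M (h a) (?phi \<pi> (h a)))"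
      by (rule prod.reindex_bij_betw[OF h, symmetric])
    also have "\<dots> = (\<Prod>a\<in>S. M (h a) (h (\<pi> a)))"
      using inj hS by (intro prod.cong) (auto simp: inv_into_f_f)
    finally show "of_int (sign (?phi \<pi>)) * (\<Prod>i\<in>T. M i (?phi \<pi> i)) =
        of_int (sign \<pi>) * (\<Prod>a\<in>S. M (h a) (h (\<pi> a)))" using s by simp
  qed
  finally show ?thesis .
qed

lemma detS_permute_cols:
  assumes s: "\<sigma> permutes S" and fin: "finite S"
  shows "detS S (\<lambda>a b. M a (\<sigma> b)) = of_int (sign \<sigma>) * detS S M"
proof -
  have ps: "permutation \<sigma>" using s fin permutation_permutes by blast
  have "detS S M = (\<Sum>p | p permutes S. of_int (sign (\<sigma> \<circ> p)) * (\<Prod>i\<in>S. M i ((\<sigma> \<circ> p) i)))"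
    unfolding detS_def by (rule setum_permutations_compose_left[OF s])
  also have "\<dots> = (\<Sum>p | p permutes S. of_int (sign \<sigma>) * (of_int (sign p) * (\<Prod>i\<in>S. M i (\<sigma> (p i)))))"
  proof (rule sum.cong[OF refl])
    fix p assume "p \<in> {p. p permutes S}"
    hence "permutation p" using fin permutation_permutes by blast
    thus "of_int (sign (\<sigma> \<circ> p)) * (\<Prod>i\<in>S. M i ((\<sigma> \<circ> p) i)) =
      of_int (sign \<sigma>) * (of_int (sign p) * (\<Prod>i\<in>S. M i (\<sigma> (p i))))"
      using sign_compose[OF ps] by simp
  qed
  also have "\<dots> = of_int (sign \<sigma>) * detS S (\<lambda>a b. M a (\<sigma> b))"
    unfolding detS_def by (simp add: sum_distrib_left)
  finally have "detS S M = of_int (sign \<sigma>) * detS S (\<lambda>a b. M a (\<sigma> b))" .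
  moreover have one: "of_int (sign \<sigma>) * of_int (sign \<sigma>) = (1::real)"
    by (metis of_int_1 of_int_mult sign_idempotent)
  ultimately have "of_int (sign \<sigma>) * detS S M = of_int (sign \<sigma>) * (of_int (sign \<sigma>) * detS S (\<lambda>a b. M a (\<sigma> b)))"
    by simp
  also have "\<dots> = (of_int (sign \<sigma>) * of_int (sign \<sigma>)) * detS S (\<lambda>a b. M a (\<sigma> b))"
    by (rule mult.assoc[symmetric])
  also have "\<dots> = detS S (\<lambda>a b. M a (\<sigma> b))" using one by simp
  finally show ?thesis by simp
qed

lemma detS_diag:
  assumes fin: "finite S" and r: "r \<in> S" and z: "\<And>i. i \<in> S \<Longrightarrow> i \<noteq> r \<Longrightarrow> M i r = 0"
  shows "detS S M = M r r * detS (S - {r}) M"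
proof -
  let ?t = "\<lambda>p. of_int (sign p) * (\<Prod>i\<in>S. M i (p i))"
  have fP: "finite {p. p permutes S}" using fin finite_permutations by blast
  have sub: "{p. p permutes (S - {r})} \<subseteq> {p. p permutes S}"
    by (auto intro: permutes_subset)
  have zero: "\<forall>p\<in>{p. p permutes S} - {p. p permutes (S - {r})}. ?t p = 0"
  proof
    fix p assume pp: "p \<in> {p. p permutes S} - {p. p permutes (S - {r})}"
    hence p: "p permutes S" by simp
    have pr: "p r \<noteq> r"
    proof
      assume "p r = r"
      hence "p permutes (S - {r})" by (intro permutes_superset[OF p]) auto
      thus False using pp by simp
    qed
    define i where "i = inv p r"
    have pi: "p i = r" unfolding i_def using permutes_inverses(1)[OF p] by simp
    have iS: "i \<in> S" unfolding i_def using permutes_in_image[OF permutes_inv[OF p]] r by simp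
    have "i \<noteq> r" using pi pr by auto
    hence "M i (p i) = 0" using z iS pi by simp
    hence "(\<Prod>i\<in>S. M i (p i)) = 0" using iS fin by (intro prod_zero) auto
    thus "?t p = 0" by simp
  qed
  have "detS S M = sum ?t {p. p permutes (S - {r})}"
    unfolding detS_def by (rule sum.mono_neutral_right[OF fP sub zero])
  also have "\<dots> = M r r * detS (S - {r}) M"
    unfolding detS_def sum_distrib_left
  proof (rule sum.cong[OF refl])
    fix p assume "p \<in> {p. p permutes S - {r}}"
    hence p: "p permutes S - {r}" by simp
    hence pr: "p r = r" by (simp add: permutes_not_in)
    have "(\<Prod>i\<in>S. M i (p i)) = M r (p r) * (\<Prod>i\<in>S - {r}. M i (p i))"
      by (rule prod.remove[OF fin r])
    thus "?t p = M r r * (of_int (sign p) * (\<Prod>i\<in>S - {r}. M i (p i)))" using pr by simp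
  qed
  finally show ?thesis .
qed

definition cyc :: "nat \<Rightarrow> nat \<Rightarrow> nat" where
  "cyc j b = (if b = 1 then j else if 2 \<le> b \<and> b \<le> j then b - 1 else b)"

lemma cyc_props:
  assumes "1 \<le> j" "j \<le> n"
  shows "cyc j permutes {1..n} \<and> sign (cyc j) = (-1) ^ (j - 1)"
  using assms
proof (induction j)
  case 0 thus ?case by simp
next
  case (Suc j)
  show ?case
  proof (cases "j = 0")
    case True
    have "cyc (Suc j) = id" using True by (auto simp: cyc_def fun_eq_iff)
    thus ?thesis using True permutes_id[of "{1..n}"] by (simp add: id_def)
  next
    case False
    have IH: "cyc j permutes {1..n} \<and> sign (cyc j) = (-1) ^ (j - 1)"
      using Suc False by simp
    have eq: "cyc (Suc j) = Transposition.transpose j (Suc j) \<circ> cyc j"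
      using False by (auto simp: cyc_def fun_eq_iff Transposition.transpose_def)
    have tp: "Transposition.transpose j (Suc j) permutes {1..n}"
      using False Suc.prems by (intro permutes_swap_id) auto
    have perm: "cyc (Suc j) permutes {1..n}"
      unfolding eq using IH tp by (intro permutes_compose) auto
    have "sign (cyc (Suc j)) = sign (Transposition.transpose j (Suc j)) * sign (cyc j)"
      unfolding eq
      by (rule sign_compose) (use IH tp in \<open>auto intro: permutes_imp_permutation\<close>)
    also have "\<dots> = (-1) ^ (Suc j - 1)"
      using IH False by (cases j) (simp_all add: sign_swap_id)
    finally show ?thesis using perm by simp
  qed
qed


lemma det_col_e1:
  fixes A :: "real^'n^'n" and num :: "nat \<Rightarrow> 'n"
  assumes num: "bij_betw num {1..CARD('n)} UNIV" and j: "j \<in> {1..CARD('n)}"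
  shows "det (\<chi> i k. if k = num j then (if i = num 1 then c else 0) else A$i$k)
         = (-1)^(j+1) * c * minor_det num A 1 j"
proof -
  define n where "n = CARD('n)"
  have n1: "1 \<le> n" unfolding n_def by (simp add: Suc_le_eq)
  define B :: "real^'n^'n" where "B = (\<chi> i k. if k = num j then (if i = num 1 then c else 0) else A$i$k)"
  define M where "M = (\<lambda>a b. B $ num a $ num b)"
  define \<sigma> where "\<sigma> = cyc j"
  define N where "N = (\<lambda>a b. M a (\<sigma> b))"
  have inj: "inj_on num {1..n}" using num unfolding n_def by (simp add: bij_betw_def)
  have jn: "1 \<le> j" "j \<le> n" using j unfolding n_def by auto
  have cp: "\<sigma> permutes {1..n} \<and> sign \<sigma> = (-1) ^ (j - 1)"
    unfolding \<sigma>_def by (rule cyc_props[OF jn])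
  have "det B = detS {1..n} M"
    unfolding det_detS M_def n_def by (rule detS_reindex[OF num]) simp
  have e1: "detS {1..n} N = of_int (sign \<sigma>) * detS {1..n} M"
    unfolding N_def by (rule detS_permute_cols) (use cp in auto)
  have sq: "(of_int (sign \<sigma>) :: real) * of_int (sign \<sigma>) = 1"
    by (metis of_int_1 of_int_mult sign_idempotent)
  have e2: "detS {1..n} M = of_int (sign \<sigma>) * detS {1..n} N"
    using e1 sq by (metis mult.assoc mult_1)
  have N1: "N i 1 = (if i = 1 then c else 0)" if "i \<in> {1..n}" for i
  proof -
    have "\<sigma> 1 = j" unfolding \<sigma>_def cyc_def by simp
    moreover have "(num i = num 1) = (i = 1)"
      using inj that n1 by (auto dest: inj_onD)
    ultimately show ?thesis unfolding N_def M_def B_def by simp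
  qed
  have e3: "detS {1..n} N = N 1 1 * detS ({1..n} - {1}) N"
    by (rule detS_diag) (use n1 N1 in auto)
  have s2: "{1..n} - {1} = {2..n}" by auto
  have bijS: "bij_betw Suc {1..n-1} {2..n}"
    using n1 by (simp add: bij_betw_def image_Suc_atLeastAtMost)
  have e4: "detS {2..n} N = detS {1..n-1} (\<lambda>a b. N (Suc a) (Suc b))"
    by (rule detS_reindex[OF bijS]) simp
  have e5: "detS {1..n-1} (\<lambda>a b. N (Suc a) (Suc b)) = minor_det num A 1 j"
    unfolding minor_det_def det_nat_detS n_def[symmetric]
  proof (rule detS_cong)
    fix a b assume a: "a \<in> {1..n-1}" and b: "b \<in> {1..n-1}"
    have sb: "\<sigma> (Suc b) = (if b < j then b else b + 1)"
      using a b unfolding \<sigma>_def cyc_def by auto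
    have sbin: "\<sigma> (Suc b) \<in> {1..n}" "\<sigma> (Suc b) \<noteq> j" using sb b jn by auto
    have "num (\<sigma> (Suc b)) \<noteq> num j"
      using inj sbin jn by (auto dest: inj_onD)
    thus "N (Suc a) (Suc b) = A $ num (if a < 1 then a else a + 1) $ num (if b < j then b else b + 1)"
      using a sb unfolding N_def M_def B_def by simp
  qed
  have "N 1 1 = c" using N1 n1 by simp
  have "det B = of_int (sign \<sigma>) * (c * minor_det num A 1 j)"
    using \<open>det B = detS {1..n} M\<close> e2 e3 s2 e4 e5 \<open>N 1 1 = c\<close> by simp
  also have "\<dots> = (-1)^(j+1) * c * minor_det num A 1 j"
    using cp jn by (cases j) simp_all
  finally show ?thesis unfolding B_def .
qed

lemma sum_delta_aux: "(\<Sum>j\<in>UNIV. c * (if j = a then 1 else 0) * (h::real^'n::finite) $ j) = c * h $ a"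
proof -
  have "(\<Sum>j\<in>UNIV. c * (if j = a then 1 else 0) * h $ j) = (\<Sum>j\<in>UNIV. if j = a then c * h $ j else 0)"
    by (rule sum.cong) auto
  thus ?thesis by simp
qed

lemma e11_mult: "(c *\<^sub>R e11 num) *v h = (c * h $ num 1) *\<^sub>R e1 num"
  by (simp add: vec_eq_iff matrix_vector_mult_def e11_def e1_def axis_def sum_delta_aux)

lemma G:
  fixes num :: "nat \<Rightarrow> 'n::finite" and f :: "real^'n \<Rightarrow> real^'n" and xs :: "real \<Rightarrow> real^'n"
  assumes fd: "f differentiable (at (xs u))"
    and xsd: "(xs has_vector_derivative D) (at u within J)"
    and uJ: "u \<in> J" and Jint: "is_interval J" and Jnt: "\<exists>a\<in>J. \<exists>b\<in>J. a < b"
    and st: "\<forall>v\<in>J. Fsys num f (\<lambda>v x1. c0 + c1 * v + c2 * x1 + c3 * v * x1) (xs v) v = 0"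
  shows "jacobian (\<lambda>x. Fsys num f (\<lambda>v x1. c0 + c1 * v + c2 * x1 + c3 * v * x1) x u) (at (xs u))
           = jacobian f (at (xs u)) + (c2 + c3*u) *\<^sub>R e11 num"
    and "(jacobian f (at (xs u)) + (c2 + c3*u) *\<^sub>R e11 num) *v D = (-(c1 + c3 * xs u $ num 1)) *\<^sub>R e1 num"
proof -
  let ?g = "\<lambda>v x1. c0 + c1 * v + c2 * x1 + c3 * v * x1"
  let ?Jf = "jacobian f (at (xs u))"
  let ?A = "?Jf + (c2 + c3*u) *\<^sub>R e11 num"
  have fder: "(f has_derivative (\<lambda>h. ?Jf *v h)) (at (xs u))"
    using fd jacobian_works by blast
  have "((\<lambda>x. Fsys num f ?g x u) has_derivative
        (\<lambda>h. ?Jf *v h + ((c2 * h $ num 1 + c3 * u * h $ num 1)) *\<^sub>R e1 num)) (at (xs u))"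
    unfolding Fsys_def
    by (rule derivative_eq_intros fder bounded_linear.has_derivative[OF bounded_linear_vec_nth] | simp)+
  also have "(\<lambda>h. ?Jf *v h + ((c2 * h $ num 1 + c3 * u * h $ num 1)) *\<^sub>R e1 num) = (\<lambda>h. ?A *v h)"
    by (simp add: fun_eq_iff matrix_vector_mult_add_rdistrib e11_mult algebra_simps)
  finally have d1: "((\<lambda>x. Fsys num f ?g x u) has_derivative (\<lambda>h. ?A *v h)) (at (xs u))" .
  show "jacobian (\<lambda>x. Fsys num f ?g x u) (at (xs u)) = ?A"
    unfolding jacobian_def frechet_derivative_at[OF d1, symmetric] by simp
  have xsd': "(xs has_derivative (\<lambda>h. h *\<^sub>R D)) (at u within J)"
    using xsd by (simp add: has_vector_derivative_def)
  have d2: "((\<lambda>v. Fsys num f ?g (xs v) v) has_derivative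
        (\<lambda>h. ?Jf *v (h *\<^sub>R D) + (c1 * h + c2 * (h *\<^sub>R D) $ num 1 + c3 * (h * xs u $ num 1 + u * (h *\<^sub>R D) $ num 1)) *\<^sub>R e1 num)) (at u within J)"
    unfolding Fsys_def
    unfolding Fsys_def
    apply (rule derivative_eq_intros has_derivative_compose[OF xsd' fder] bounded_linear.has_derivative[OF bounded_linear_vec_nth] xsd' | simp)+
    by (simp add: fun_eq_iff algebra_simps)
  define V where "V = ?Jf *v D + (c1 + c2 * D $ num 1 + c3 * (xs u $ num 1 + u * D $ num 1)) *\<^sub>R e1 num"
  have "(\<lambda>h. ?Jf *v (h *\<^sub>R D) + (c1 * h + c2 * (h *\<^sub>R D) $ num 1 + c3 * (h * xs u $ num 1 + u * (h *\<^sub>R D) $ num 1)) *\<^sub>R e1 num)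
     = (\<lambda>h. h *\<^sub>R V)"
    by (simp add: V_def fun_eq_iff algebra_simps matrix_vector_mult_scaleR)
  with d2 have d3: "((\<lambda>v. Fsys num f ?g (xs v) v) has_vector_derivative V) (at u within J)"
    by (simp add: has_vector_derivative_def)
  have d4: "((\<lambda>v. 0) has_vector_derivative V) (at u within J)"
    by (rule has_vector_derivative_transform_within[OF d3 zero_less_one uJ]) (use st in auto)
  have d5: "((\<lambda>v. 0) has_vector_derivative 0) (at u within J)"
    by (rule derivative_intros)
  have nb: "at u within J \<noteq> bot"
  proof -
    have "u islimpt J"
    proof (rule connected_imp_perfect[OF is_interval_connected[OF Jint] uJ])
      fix x show "J \<noteq> {x}" using Jnt by auto
    qed
    thus ?thesis using trivial_limit_within by blast
  qed
  have V0: "V = 0" using vector_derivative_unique_within[OF nb d4 d5] .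
  have "?A *v D = ?Jf *v D + (c2 * D $ num 1 + c3 * u * D $ num 1) *\<^sub>R e1 num"
    by (simp add: matrix_vector_mult_add_rdistrib e11_mult algebra_simps)
  also have "\<dots> = V - (c1 + c3 * xs u $ num 1) *\<^sub>R e1 num"
    by (simp add: V_def algebra_simps)
  finally have "?A *v D = - ((c1 + c3 * xs u $ num 1) *\<^sub>R e1 num)" using V0 by simp
  thus "?A *v D = (-(c1 + c3 * xs u $ num 1)) *\<^sub>R e1 num" by (simp only: scaleR_minus_left)
qed
lemma minor_e11:
  assumes num: "bij_betw num {1..CARD('n::finite)} UNIV"
  shows "minor_det num (A + k *\<^sub>R e11 num) 1 j = minor_det num (A::real^'n^'n) 1 j"
  unfolding minor_det_def det_nat_detS
proof (rule detS_cong)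
  fix a b assume a: "a \<in> {1..CARD('n) - 1}"
  have inj: "inj_on num {1..CARD('n)}" using num by (simp add: bij_betw_def)
  have "num (a + 1) \<noteq> num 1"
  proof
    assume "num (a + 1) = num 1"
    hence "a + 1 = 1" using inj a by (auto dest: inj_onD simp: Suc_le_eq)
    thus False using a by simp
  qed
  thus "(A + k *\<^sub>R e11 num) $ num (if a < 1 then a else a + 1) $ num (if b < j then b else b + 1) =
        A $ num (if a < 1 then a else a + 1) $ num (if b < j then b else b + 1)"
    using a by (simp add: e11_def)
qed

lemma case_gen:
  fixes num :: "nat \<Rightarrow> 'n::finite" and f :: "real^'n \<Rightarrow> real^'n" and xs xs' :: "real \<Rightarrow> real^'n"
  assumes num: "bij_betw num {1..CARD('n)} UNIV"
    and fd: "f differentiable (at (xs u))"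
    and xsd: "(xs has_vector_derivative xs' u) (at u within J)"
    and uJ: "u \<in> J" and Jint: "is_interval J" and Jnt: "\<exists>a\<in>J. \<exists>b\<in>J. a < b"
    and st: "\<forall>v\<in>J. Fsys num f (\<lambda>v x1. c0 + c1 * v + c2 * x1 + c3 * v * x1) (xs v) v = 0"
    and ns: "det (jacobian (\<lambda>x. Fsys num f (\<lambda>v x1. c0 + c1 * v + c2 * x1 + c3 * v * x1) x u) (at (xs u))) \<noteq> 0"
    and j: "j \<in> {1..CARD('n)}"
  shows "xs' u $ num j = (-1)^(j+1) * (-(c1 + c3 * xs u $ num 1)) * minor_det num (jacobian f (at (xs u))) 1 j
           / det (jacobian f (at (xs u)) + (c2 + c3 * u) *\<^sub>R e11 num)"
proof -
  let ?A = "jacobian f (at (xs u)) + (c2 + c3 * u) *\<^sub>R e11 num"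
  let ?be = "-(c1 + c3 * xs u $ num 1)"
  have dA: "det ?A \<noteq> 0" using ns G(1)[OF fd xsd uJ Jint Jnt st] by simp
  have eq: "?A *v xs' u = ?be *\<^sub>R e1 num" by (rule G(2)[OF fd xsd uJ Jint Jnt st])
  have "xs' u = (\<chi> k. det (\<chi> i j. if j = k then (?be *\<^sub>R e1 num) $ i else ?A $ i $ j) / det ?A)"
    using cramer[OF dA] eq by blast
  hence "xs' u $ num j = det (\<chi> i k. if k = num j then (?be *\<^sub>R e1 num) $ i else ?A $ i $ k) / det ?A"
    by simp
  also have "(\<chi> i k. if k = num j then (?be *\<^sub>R e1 num) $ i else ?A $ i $ k)
           = (\<chi> i k. if k = num j then (if i = num 1 then ?be else 0) else ?A $ i $ k)"
    by (simp add: vec_eq_iff e1_def axis_def)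
  also have "det \<dots> = (-1)^(j+1) * ?be * minor_det num ?A 1 j"
    by (rule det_col_e1[OF num j])
  also have "minor_det num ?A 1 j = minor_det num (jacobian f (at (xs u))) 1 j"
    by (rule minor_e11[OF num])
  finally show ?thesis .
qed

theorem lemma8:
  fixes num :: "nat \<Rightarrow> 'n::finite"
    and X :: "(real^'n) set" and J :: "real set"
    and f :: "real^'n \<Rightarrow> real^'n"
    and g :: "real \<Rightarrow> real \<Rightarrow> real"
    and xT kon koff :: real
    and xs xs' :: "real \<Rightarrow> real^'n"
    and j :: nat
  assumes num: "bij_betw num {1..CARD('n)} UNIV"
    and J_int: "is_interval J" and J_nontriv: "\<exists>a\<in>J. \<exists>b\<in>J. a < b"
    and f_diff: "\<forall>x\<in>X. f differentiable (at x)"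
    and f_C1: "continuous_on X (\<lambda>x. jacobian f (at x))"
    and f_sign: "\<forall>i k. \<exists>s. \<forall>x\<in>X. sgn (jacobian f (at x) $ i $ k) = s"
    and f_diag: "\<forall>i. \<forall>x\<in>X. jacobian f (at x) $ i $ i < 0"
    and kpos: "xT > 0" "kon > 0" "koff > 0"
    and g_cases: "g = g_flow \<or> g = g_act xT kon koff \<or> g = g_inh xT kon koff"
    and A0: "\<forall>u0\<in>J. \<exists>x0\<in>X. Fsys num f g x0 u0 = 0 \<and>
               rank (jacobian (\<lambda>x. Fsys num f g x u0) (at x0)) = CARD('n)"
    and xs_in: "\<forall>u\<in>J. xs u \<in> X"
    and xs_deriv: "\<forall>u\<in>J. (xs has_vector_derivative xs' u) (at u within J)"
    and xs'_cont: "continuous_on J xs'"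
    and steady: "\<forall>u\<in>J. Fsys num f g (xs u) u = 0"
    and nonsing: "\<forall>u\<in>J. det (jacobian (\<lambda>x. Fsys num f g x u) (at (xs u))) \<noteq> 0"
    and j: "j \<in> {1..CARD('n)}"
  shows "\<forall>u\<in>J.
     (g = g_flow \<longrightarrow>
        xs' u $ num j = (-1) ^ j * minor_det num (jacobian f (at (xs u))) 1 j
                        / det (jacobian f (at (xs u)))) \<and>
     (g = g_act xT kon koff \<longrightarrow>
        xs' u $ num j = (-1) ^ j * (xT - xs u $ num 1) * minor_det num (jacobian f (at (xs u))) 1 j
                        / det (jacobian f (at (xs u)) - (u + kon + koff) *\<^sub>R e11 num)) \<and>
     (g = g_inh xT kon koff \<longrightarrow>
        xs' u $ num j = (-1) ^ (j + 1) * (xs u $ num 1) * minor_det num (jacobian f (at (xs u))) 1 j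
                        / det (jacobian f (at (xs u)) - (u + kon + koff) *\<^sub>R e11 num))"
proof
  fix u assume uJ: "u \<in> J"
  have fd: "f differentiable (at (xs u))" using f_diff xs_in uJ by blast
  have xsd: "(xs has_vector_derivative xs' u) (at u within J)" using xs_deriv uJ by blast
  show "(g = g_flow \<longrightarrow>
        xs' u $ num j = (-1) ^ j * minor_det num (jacobian f (at (xs u))) 1 j
                        / det (jacobian f (at (xs u)))) \<and>
     (g = g_act xT kon koff \<longrightarrow>
        xs' u $ num j = (-1) ^ j * (xT - xs u $ num 1) * minor_det num (jacobian f (at (xs u))) 1 j
                        / det (jacobian f (at (xs u)) - (u + kon + koff) *\<^sub>R e11 num)) \<and>
     (g = g_inh xT kon koff \<longrightarrow>
        xs' u $ num j = (-1) ^ (j + 1) * (xs u $ num 1) * minor_det num (jacobian f (at (xs u))) 1 j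
                        / det (jacobian f (at (xs u)) - (u + kon + koff) *\<^sub>R e11 num))"
  proof (intro conjI impI)
    assume "g = g_flow"
    hence geq: "g = (\<lambda>v x1. 0 + 1 * v + 0 * x1 + 0 * v * x1)" by (simp add: g_flow_def fun_eq_iff)
    have h1: "xs' u $ num j = (-1)^(j+1) * (-(1 + 0 * xs u $ num 1)) * minor_det num (jacobian f (at (xs u))) 1 j
           / det (jacobian f (at (xs u)) + (0 + 0 * u) *\<^sub>R e11 num)"
      by (rule case_gen[where xs="xs" and u="u" and xs'="xs'" and f="f" and J="J" and num="num" and j="j" and ?c0.0="0" and ?c1.0="1" and ?c2.0="0" and ?c3.0="0", OF num fd xsd uJ J_int J_nontriv steady[unfolded geq] nonsing[rule_format, OF uJ, unfolded geq] j])
    have h2: "jacobian f (at (xs u)) + (0 + 0 * u) *\<^sub>R e11 num = jacobian f (at (xs u))" by simp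
    have h3: "(-1::real)^(j+1) * (-(1 + 0 * xs u $ num 1)) = (-1) ^ j" by simp
    show "xs' u $ num j = (-1) ^ j * minor_det num (jacobian f (at (xs u))) 1 j
                        / det (jacobian f (at (xs u)))"
      using h1 unfolding h2 h3 .
  next
    assume "g = g_act xT kon koff"
    hence geq: "g = (\<lambda>v x1. kon * xT + xT * v + (-(kon + koff)) * x1 + (-1) * v * x1)"
      by (simp add: g_act_def fun_eq_iff algebra_simps)
    have h1: "xs' u $ num j = (-1)^(j+1) * (-(xT + (-1) * xs u $ num 1)) * minor_det num (jacobian f (at (xs u))) 1 j
           / det (jacobian f (at (xs u)) + ((-(kon + koff)) + (-1) * u) *\<^sub>R e11 num)"
      by (rule case_gen[where xs="xs" and u="u" and xs'="xs'" and f="f" and J="J" and num="num" and j="j" and ?c0.0="kon * xT" and ?c1.0="xT" and ?c2.0="-(kon + koff)" and ?c3.0="-1", OF num fd xsd uJ J_int J_nontriv steady[unfolded geq] nonsing[rule_format, OF uJ, unfolded geq] j])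
    have h2: "jacobian f (at (xs u)) + ((-(kon + koff)) + (-1) * u) *\<^sub>R e11 num
        = jacobian f (at (xs u)) - (u + kon + koff) *\<^sub>R e11 num"
      by (simp add: algebra_simps scaleR_left_distrib)
    have h3: "(-1::real)^(j+1) * (-(xT + (-1) * xs u $ num 1)) = (-1) ^ j * (xT - xs u $ num 1)"
      by (simp add: algebra_simps)
    show "xs' u $ num j = (-1) ^ j * (xT - xs u $ num 1) * minor_det num (jacobian f (at (xs u))) 1 j
                        / det (jacobian f (at (xs u)) - (u + kon + koff) *\<^sub>R e11 num)"
      using h1 unfolding h2 h3 .
  next
    assume "g = g_inh xT kon koff"
    hence geq: "g = (\<lambda>v x1. kon * xT + 0 * v + (-(kon + koff)) * x1 + (-1) * v * x1)"
      by (simp add: g_inh_def fun_eq_iff algebra_simps)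
    have h1: "xs' u $ num j = (-1)^(j+1) * (-(0 + (-1) * xs u $ num 1)) * minor_det num (jacobian f (at (xs u))) 1 j
           / det (jacobian f (at (xs u)) + ((-(kon + koff)) + (-1) * u) *\<^sub>R e11 num)"
      by (rule case_gen[where xs="xs" and u="u" and xs'="xs'" and f="f" and J="J" and num="num" and j="j" and ?c0.0="kon * xT" and ?c1.0="0" and ?c2.0="-(kon + koff)" and ?c3.0="-1", OF num fd xsd uJ J_int J_nontriv steady[unfolded geq] nonsing[rule_format, OF uJ, unfolded geq] j])
    have h2: "jacobian f (at (xs u)) + ((-(kon + koff)) + (-1) * u) *\<^sub>R e11 num
        = jacobian f (at (xs u)) - (u + kon + koff) *\<^sub>R e11 num"
      by (simp add: algebra_simps scaleR_left_distrib)
    have h3: "(-1::real)^(j+1) * (-(0 + (-1) * xs u $ num 1)) = (-1) ^ (j + 1) * (xs u $ num 1)"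
      by simp
    show "xs' u $ num j = (-1) ^ (j + 1) * (xs u $ num 1) * minor_det num (jacobian f (at (xs u))) 1 j
                        / det (jacobian f (at (xs u)) - (u + kon + koff) *\<^sub>R e11 num)"
      using h1 unfolding h2 h3 .
  qed
qed

end
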